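(* Let $d \ge 1$ be an integer and $p$ a prime number. Choose the coefficient vector $(a_0, a_1, \ldots, a_d)$ uniformly at random in $(\mathbb{Z}/p\mathbb{Z})^{d+1}$ (each of the $p^{d+1}$ vectors with probability $p^{-(d+1)}$), and let $P(x) = a_0x^d + a_1x^{d-1} + \cdots + a_{d-1}x + a_d$. Then the probability that $p$ is not a periodic prime divisor of $P$, i.e. that $P(m) \not\equiv 0 \pmod p$ for every $m \in \mathbb{Z}$, equals $$D_d(p) = \left(1-\frac1p\right)\sum_{k=0}^{\min(d,p-1)} (-1)^k \binom{p-1}{k} p^{-k}.$$ In particular, if $p \le d+1$, then $D_d(p) = \left(1-\frac1p\right)^p$.
   Context: A prime $p$ is called a periodic prime divisor (d.p.p.) of an integer-valued polynomial $P$ if for every $m \in \mathbb{Z}$, $p$ divides at least one of $P(m), P(m+1), \ldots, P(m+p-1)$; for a polynomial with integer coefficients this holds if and only if there exists $m \in \mathbb{Z}$ with $p \mid P(m)$. The polynomials considered have integer coefficients and the random model is the uniform distribution of the coefficients modulo $p$ (leading coefficient allowed to be $0$ mod $p$). *)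

theory Defs
  imports "HOL-Probability.Probability"
begin

definition polyval :: "nat \<Rightarrow> (nat \<Rightarrow> int) \<Rightarrow> int \<Rightarrow> int" where
  "polyval d a x = (\<Sum>i=0..d. a i * x ^ (d - i))"

definition dpp :: "nat \<Rightarrow> (int \<Rightarrow> int) \<Rightarrow> bool" where
  "dpp p P \<longleftrightarrow> (\<forall>m::int. \<exists>j<p. int p dvd P (m + int j))"

text \<open>Coefficient vectors, representing (Z/pZ)^(d+1) by residues 0..p-1.\<close>
definition coeff_vectors :: "nat \<Rightarrow> nat \<Rightarrow> (nat \<Rightarrow> int) set" where
  "coeff_vectors d p = PiE {0..d} (\<lambda>_. {0..<int p})"

definition D :: "nat \<Rightarrow> nat \<Rightarrow> real" where
  "D d p = (1 - 1 / real p) *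
     (\<Sum>k=0..min d (p - 1). (-1) ^ k * real ((p - 1) choose k) * (1 / real p) ^ k)"

end

theory Submission
  imports Defs "HOL-Number_Theory.Cong"
begin


lemma diff_identity:
  fixes w :: "nat \<Rightarrow> real"
  shows "(\<Sum>k=0..Suc N. (-1)^k * real (Suc N choose k) * w k)
       = (\<Sum>k=0..N. (-1)^k * real (N choose k) * (w k - w (Suc k)))"
proof -
  have A: "(\<Sum>k=0..Suc N. (-1)^k * real (N choose k) * w k) = (\<Sum>k=0..N. (-1)^k * real (N choose k) * w k)"
    by simp
  have B: "(\<Sum>k=0..Suc N. (-1)^k * real (N choose k) * w k)
        = w 0 + (\<Sum>k=0..N. (-1)^(Suc k) * real (N choose Suc k) * w (Suc k))"
    by (subst sum.atLeast0_atMost_Suc_shift) simp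
  have "(\<Sum>k=0..Suc N. (-1)^k * real (Suc N choose k) * w k)
      = w 0 + (\<Sum>k=0..N. (-1)^(Suc k) * real (Suc N choose Suc k) * w (Suc k))"
    by (subst sum.atLeast0_atMost_Suc_shift) simp
  also have "\<dots> = w 0 + (\<Sum>k=0..N. (-1)^(Suc k) * real (N choose Suc k) * w (Suc k))
      + (\<Sum>k=0..N. (-1)^(Suc k) * real (N choose k) * w (Suc k))"
    by (simp add: algebra_simps sum.distrib sum_subtractf sum_negf)
  also have "\<dots> = (\<Sum>k=0..N. (-1)^k * real (N choose k) * w k)
      + (\<Sum>k=0..N. (-1)^(Suc k) * real (N choose k) * w (Suc k))"
    using A B by linarith
  also have "\<dots> = (\<Sum>k=0..N. (-1)^k * real (N choose k) * (w k - w (Suc k)))"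
    by (simp add: algebra_simps sum.distrib sum_subtractf sum_negf)
  finally show ?thesis .
qed

lemma final_identity:
  assumes p2: "p \<ge> 2"
  shows "(\<Sum>k=0..p. (-1)^k * real (p choose k) * real p ^ (Suc d - k)) / real p ^ Suc d = D d p"
proof -
  define q where "q = 1 / real p"
  obtain N where N: "p = Suc N" using p2 by (cases p) auto
  have pp: "real p > 0" using p2 by simp
  define w where "w k = q ^ (min k (Suc d))" for k
  have w1: "real p ^ (Suc d - k) / real p ^ Suc d = w k" for k
  proof (cases "k \<le> Suc d")
    case True
    then have "real p ^ Suc d = real p ^ (Suc d - k) * real p ^ k"
      by (metis le_add_diff_inverse2 power_add)
    then show ?thesis using True pp by (simp add: w_def q_def power_one_over)
  next
    case False
    then show ?thesis using pp by (simp add: w_def q_def power_one_over)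
  qed
  have w2: "w k - w (Suc k) = (if k \<le> d then (1 - q) * q ^ k else 0)" for k
    by (auto simp: w_def min_def algebra_simps le_Suc_eq)
  have "(\<Sum>k=0..p. (-1)^k * real (p choose k) * real p ^ (Suc d - k)) / real p ^ Suc d
      = (\<Sum>k=0..p. (-1)^k * real (p choose k) * w k)"
    by (simp add: sum_divide_distrib w1[symmetric])
  also have "\<dots> = (\<Sum>k=0..N. (-1)^k * real (N choose k) * (w k - w (Suc k)))"
    unfolding N by (rule diff_identity)
  also have "\<dots> = (\<Sum>k=0..N. (if k \<le> d then (-1)^k * real (N choose k) * ((1 - q) * q ^ k) else 0))"
    by (rule sum.cong) (auto simp: w2)
  also have "\<dots> = (\<Sum>k=0..min d N. (-1)^k * real (N choose k) * ((1 - q) * q ^ k))"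
    by (rule sum.mono_neutral_cong_right) auto
  also have "\<dots> = D d p"
    unfolding D_def q_def N by (simp add: sum_distrib_left algebra_simps)
  finally show ?thesis .
qed

lemma D_small:
  assumes p2: "p \<ge> 2" and "p \<le> d + 1"
  shows "D d p = (1 - 1 / real p) ^ p"
proof -
  obtain N where N: "p = Suc N" using p2 by (cases p) auto
  have m: "min d (p - 1) = N" using assms N by simp
  have "(\<Sum>k=0..N. (-1)^k * real (N choose k) * (1 / real p) ^ k) = (1 - 1 / real p) ^ N"
    using binomial_ring[of "- (1 / real p)" 1 N]
    by (simp add: atLeast0AtMost power_minus' algebra_simps power_mult_distrib)
  then show ?thesis unfolding D_def m by (simp add: N)
qed



definition ev :: "nat \<Rightarrow> (nat \<Rightarrow> int) \<Rightarrow> int \<Rightarrow> int" where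
  "ev n c x = (\<Sum>i<n. c i * x ^ i)"

definition CV :: "nat \<Rightarrow> nat \<Rightarrow> (nat \<Rightarrow> int) set" where
  "CV p n = PiE {..<n} (\<lambda>_. {0..<int p})"

definition VV :: "nat \<Rightarrow> nat \<Rightarrow> int set \<Rightarrow> (nat \<Rightarrow> int) set" where
  "VV p n S = {c \<in> CV p n. \<forall>t\<in>S. int p dvd ev n c t}"

definition phi :: "nat \<Rightarrow> nat \<Rightarrow> int \<Rightarrow> (nat \<Rightarrow> int) \<Rightarrow> (nat \<Rightarrow> int)" where
  "phi p m s b = (\<lambda>i. if i \<le> m then ((if i = 0 then 0 else b (i - 1)) - s * (if i < m then b i else 0)) mod int p
                     else undefined)"

lemma small_eq:
  fixes x y :: int
  assumes "0 \<le> x" "x < q" "0 \<le> y" "y < q" "q dvd (x - y)"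
  shows "x = y"
proof -
  have "x mod q = y mod q" using assms(5) by (simp add: mod_eq_dvd_iff)
  then show ?thesis using assms by simp
qed

lemma phi_ev:
  assumes "p > 0"
  shows "int p dvd (ev (Suc m) (phi p m s b) x - (x - s) * ev m b x)"
proof -
  define u where "u i = (if i = 0 then 0 else b (i - 1)) - s * (if i < m then b i else 0)" for i
  have e1: "(\<Sum>i<Suc m. u i * x ^ i) = (x - s) * ev m b x"
  proof -
    have "(\<Sum>i<Suc m. (if i = 0 then 0 else b (i - 1)) * x ^ i) = x * ev m b x"
      by (subst sum.lessThan_Suc_shift) (simp add: ev_def sum_distrib_left algebra_simps)
    moreover have "(\<Sum>i<Suc m. (if i < m then b i else 0) * x ^ i) = ev m b x"
      by (simp add: ev_def)
    ultimately show ?thesis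
      by (simp add: u_def algebra_simps sum_subtractf sum_distrib_left[symmetric])
  qed
  have "ev (Suc m) (phi p m s b) x - (\<Sum>i<Suc m. u i * x ^ i) = (\<Sum>i<Suc m. (u i mod int p - u i) * x ^ i)"
  proof -
    have "ev (Suc m) (phi p m s b) x - (\<Sum>i<Suc m. u i * x ^ i) = (\<Sum>i<Suc m. phi p m s b i * x ^ i - u i * x ^ i)"
      by (simp add: ev_def sum_subtractf)
    also have "\<dots> = (\<Sum>i<Suc m. (u i mod int p - u i) * x ^ i)"
      by (rule sum.cong) (auto simp: phi_def u_def algebra_simps)
    finally show ?thesis .
  qed
  moreover have "int p dvd (\<Sum>i<Suc m. (u i mod int p - u i) * x ^ i)"
    by (intro dvd_sum dvd_mult2) (simp add: mod_eq_dvd_iff [symmetric] dvd_diff_commute)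
  ultimately show ?thesis using e1 by simp
qed

lemma phi_CV: "p > 0 \<Longrightarrow> phi p m s b \<in> CV p (Suc m)"
  by (auto simp: CV_def phi_def PiE_def extensional_def)

lemma phi_inj:
  assumes p: "p > 0"
  shows "inj_on (phi p m s) (CV p m)"
proof
  fix b1 b2 assume b1: "b1 \<in> CV p m" and b2: "b2 \<in> CV p m" and eq: "phi p m s b1 = phi p m s b2"
  have key: "i < m \<longrightarrow> b1 i = b2 i" for i
  proof (induction "m - i" arbitrary: i rule: less_induct)
    case less
    show ?case
    proof
      assume im: "i < m"
      have nxt: "(if Suc i < m then b1 (Suc i) else 0) = (if Suc i < m then b2 (Suc i) else 0)"
        using less[of "Suc i"] im by auto
      have "phi p m s b1 (Suc i) = phi p m s b2 (Suc i)" using eq by simp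
      then have "(b1 i - s * (if Suc i < m then b1 (Suc i) else 0)) mod int p
               = (b2 i - s * (if Suc i < m then b2 (Suc i) else 0)) mod int p"
        using im by (simp add: phi_def)
      then have "int p dvd (b1 i - b2 i)"
        unfolding nxt by (simp add: mod_eq_dvd_iff)
      moreover have "b1 i \<in> {0..<int p}" "b2 i \<in> {0..<int p}"
        using b1 b2 im by (auto simp: CV_def PiE_def Pi_def)
      ultimately show "b1 i = b2 i" using small_eq[of "b1 i" "int p" "b2 i"] by auto
    qed
  qed
  show "b1 = b2"
  proof
    fix i show "b1 i = b2 i"
      using key[of i] b1 b2 by (cases "i < m") (auto simp: CV_def PiE_def extensional_def)
  qed
qed

lemma phi_surj:
  assumes p: "p > 0" and c: "c \<in> CV p (Suc m)" and cs: "int p dvd ev (Suc m) c s"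
  shows "\<exists>b \<in> CV p m. phi p m s b = c"
proof -
  define T where "T i = (\<Sum>j\<in>{Suc i..m}. c j * s ^ (j - Suc i))" for i
  define T' where "T' i = (\<Sum>j\<in>{i..m}. c j * s ^ (j - i))" for i
  define b where "b i = (if i < m then T i mod int p else undefined)" for i
  have TT: "T' i = c i + s * T i" if "i \<le> m" for i
  proof -
    have "T' i = c i + (\<Sum>j\<in>{Suc i..m}. c j * s ^ (j - i))"
      unfolding T'_def using that by (simp add: sum.atLeast_Suc_atMost)
    also have "(\<Sum>j\<in>{Suc i..m}. c j * s ^ (j - i)) = s * T i"
      unfolding T_def sum_distrib_left
    proof (rule sum.cong)
      fix j assume "j \<in> {Suc i..m}"
      then have "j - i = Suc (j - Suc i)" by auto
      then show "c j * s ^ (j - i) = s * (c j * s ^ (j - Suc i))" by simp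
    qed simp
    finally show ?thesis .
  qed
  have TT1: "T (i - 1) = T' i" if "i \<ge> 1" for i
    unfolding T_def T'_def using that by simp
  have T0: "T' 0 = ev (Suc m) c s"
    unfolding T'_def ev_def by (simp add: atLeast0AtMost lessThan_Suc_atMost)
  have Tm: "T m = 0" by (simp add: T_def)
  have cr: "c i \<in> {0..<int p}" if "i \<le> m" for i using c that by (auto simp: CV_def PiE_def Pi_def)
  have bCV: "b \<in> CV p m" using p by (auto simp: CV_def b_def PiE_def extensional_def)
  have "phi p m s b = c"
  proof
    fix i
    show "phi p m s b i = c i"
    proof (cases "i \<le> m")
      case False
      then show ?thesis using c by (auto simp: phi_def CV_def PiE_def extensional_def)
    next
      case True
      define B where "B = (if i = 0 then 0 else b (i - 1))"
      define b' where "b' = (if i < m then b i else 0)"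
      have "int p dvd (b' - T i)"
        using Tm True by (auto simp: b'_def b_def mod_eq_dvd_iff[symmetric] le_less)
      have "int p dvd (B - (if i = 0 then 0 else T' i))"
      proof (cases "i = 0")
        case False
        then have "i - 1 < m" using True by simp
        then show ?thesis using False TT1[of i]
          by (simp add: B_def b_def mod_eq_dvd_iff[symmetric])
      qed (simp add: B_def)
      have "int p dvd ((B - s * b') - c i)"
      proof (cases "i = 0")
        case True
        have eq: "B - s * b' - c i = - (s * (b' - T 0)) - (T' 0) "
          using TT[of 0] True by (simp add: B_def algebra_simps)
        have "int p dvd s * (b' - T 0)" using \<open>int p dvd (b' - T i)\<close> True by simp
        then show ?thesis unfolding eq using cs T0 by (metis dvd_diff dvd_minus_iff)
      next
        case False
        have eq: "B - s * b' - c i = (B - T' i) - s * (b' - T i)"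
          using TT[of i] \<open>i \<le> m\<close> by (simp add: algebra_simps)
        have "int p dvd (B - T' i)" using \<open>int p dvd (B - (if i = 0 then 0 else T' i))\<close> False by simp
        moreover have "int p dvd s * (b' - T i)" using \<open>int p dvd (b' - T i)\<close> by simp
        ultimately show ?thesis unfolding eq by (metis dvd_diff)
      qed
      then have "(B - s * b') mod int p = c i mod int p" by (simp add: mod_eq_dvd_iff)
      also have "\<dots> = c i" using cr[OF True] by simp
      finally show ?thesis using True by (simp add: phi_def B_def b'_def)
    qed
  qed
  then show ?thesis using bCV by blast
qed

lemma VV_insert:
  assumes pr: "prime p" and s: "s \<in> {0..<int p}" and S: "S \<subseteq> {0..<int p}" and sS: "s \<notin> S"
  shows "VV p (Suc m) (insert s S) = phi p m s ` VV p m S"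
proof -
  have p0: "p > 0" using pr prime_gt_0_nat by blast
  have ipr: "prime (int p)" using pr by simp
  have nd: "\<not> int p dvd (t - s)" if "t \<in> S" for t
  proof
    assume "int p dvd (t - s)"
    then have "t = s" using small_eq[of t "int p" s] that S s by auto
    then show False using that sS by simp
  qed
  have iff: "int p dvd ev (Suc m) (phi p m s b) t \<longleftrightarrow> int p dvd ev m b t" if "t \<in> S" for t b
  proof -
    have "int p dvd ev (Suc m) (phi p m s b) t \<longleftrightarrow> int p dvd ((t - s) * ev m b t)"
      using phi_ev[OF p0, of m s b t] by (metis dvd_add_right_iff diff_add_cancel dvd_diff)
    also have "\<dots> \<longleftrightarrow> int p dvd ev m b t"
      using prime_dvd_mult_iff[OF ipr] nd[OF that] by blast
    finally show ?thesis .
  qed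
  have ats: "int p dvd ev (Suc m) (phi p m s b) s" for b
    using phi_ev[OF p0, of m s b s] by simp
  show ?thesis
  proof
    show "VV p (Suc m) (insert s S) \<subseteq> phi p m s ` VV p m S"
    proof
      fix c assume c: "c \<in> VV p (Suc m) (insert s S)"
      then obtain b where b: "b \<in> CV p m" "phi p m s b = c"
        using phi_surj[OF p0, of c m s] by (auto simp: VV_def)
      have "b \<in> VV p m S" using c b iff by (auto simp: VV_def)
      then show "c \<in> phi p m s ` VV p m S" using b by blast
    qed
  next
    show "phi p m s ` VV p m S \<subseteq> VV p (Suc m) (insert s S)"
      using iff ats phi_CV[OF p0] by (auto simp: VV_def)
  qed
qed

lemma card_VV:
  assumes pr: "prime p" and fin: "finite S" and S: "S \<subseteq> {0..<int p}"
  shows "card (VV p n S) = p ^ (n - card S)"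
  using fin S
proof (induction S arbitrary: n rule: finite_induct)
  case empty
  have "VV p n {} = CV p n" by (simp add: VV_def)
  then show ?case by (simp add: CV_def card_PiE)
next
  case (insert s S)
  have p0: "p > 0" using pr prime_gt_0_nat by blast
  show ?case
  proof (cases n)
    case 0
    have "VV p 0 (insert s S) = CV p 0" by (auto simp: VV_def ev_def)
    then show ?thesis using 0 by (simp add: CV_def)
  next
    case (Suc m)
    have "card (VV p n (insert s S)) = card (phi p m s ` VV p m S)"
      using VV_insert[OF pr, of s S m] insert Suc by simp
    also have "\<dots> = card (VV p m S)"
      by (rule card_image, rule inj_on_subset[OF phi_inj[OF p0]]) (auto simp: VV_def)
    also have "\<dots> = p ^ (n - card (insert s S))"
      using insert Suc by simp
    finally show ?thesis .
  qed
qed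

lemma prod_bool:
  assumes "finite A"
  shows "(\<Prod>x\<in>A. if P x then 1 else (0::real)) = (if \<forall>x\<in>A. P x then 1 else 0)"
  using assms by (induction A rule: finite_induct) auto

lemma card_filter_real:
  assumes "finite A"
  shows "real (card {x \<in> A. P x}) = (\<Sum>x\<in>A. if P x then 1 else 0)"
proof -
  have "real (card {x \<in> A. P x}) = (\<Sum>x\<in>{x \<in> A. P x}. 1)" by simp
  also have "\<dots> = (\<Sum>x\<in>A. if P x then 1 else 0)"
    by (rule sum.inter_filter[OF assms])
  finally show ?thesis .
qed

definition NR :: "nat \<Rightarrow> nat \<Rightarrow> (nat \<Rightarrow> int) set" where
  "NR p n = {c \<in> CV p n. \<forall>t\<in>{0..<int p}. \<not> int p dvd ev n c t}"

lemma card_NR: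
  assumes pr: "prime p"
  shows "real (card (NR p n)) = (\<Sum>k=0..p. (-1)^k * real (p choose k) * real p ^ (n - k))"
proof -
  define Z where "Z = {0..<int p}"
  have fZ: "finite Z" by (simp add: Z_def)
  have cZ: "card Z = p" by (simp add: Z_def)
  have fCV: "finite (CV p n)" by (simp add: CV_def finite_PiE)
  define ind where "ind c t = (if int p dvd ev n c t then 1 else (0::real))" for c t
  have "real (card (NR p n)) = (\<Sum>c\<in>CV p n. if \<forall>t\<in>Z. \<not> int p dvd ev n c t then 1 else 0)"
    unfolding NR_def Z_def by (rule card_filter_real[OF fCV])
  also have "\<dots> = (\<Sum>c\<in>CV p n. \<Prod>t\<in>Z. (- ind c t) + 1)"
    by (rule sum.cong[OF refl]) (simp add: prod_bool[OF fZ, symmetric] ind_def, rule prod.cong, auto)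
  also have "\<dots> = (\<Sum>c\<in>CV p n. \<Sum>B\<in>Pow Z. (-1) ^ card B * (if c \<in> VV p n B then 1 else 0))"
  proof (rule sum.cong[OF refl])
    fix c assume c: "c \<in> CV p n"
    have "(\<Prod>t\<in>Z. (- ind c t) + 1) = (\<Sum>B\<in>Pow Z. (\<Prod>t\<in>B. - ind c t) * (\<Prod>t\<in>Z - B. 1))"
      by (rule prod_add[OF fZ])
    also have "\<dots> = (\<Sum>B\<in>Pow Z. (-1) ^ card B * (if c \<in> VV p n B then 1 else 0))"
    proof (rule sum.cong[OF refl])
      fix B assume "B \<in> Pow Z"
      then have fB: "finite B" using fZ finite_subset by auto
      show "(\<Prod>t\<in>B. - ind c t) * (\<Prod>t\<in>Z - B. 1) = (-1) ^ card B * (if c \<in> VV p n B then 1 else 0)"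
        using c by (simp add: prod_uminus ind_def prod_bool[OF fB] VV_def)
    qed
    finally show "(\<Prod>t\<in>Z. (- ind c t) + 1) = (\<Sum>B\<in>Pow Z. (-1) ^ card B * (if c \<in> VV p n B then 1 else 0))" .
  qed
  also have "\<dots> = (\<Sum>B\<in>Pow Z. (-1) ^ card B * (\<Sum>c\<in>CV p n. if c \<in> VV p n B then 1 else 0))"
    by (subst sum.swap) (simp add: sum_distrib_left)
  also have "\<dots> = (\<Sum>B\<in>Pow Z. (-1) ^ card B * real p ^ (n - card B))"
  proof (rule sum.cong[OF refl])
    fix B assume B: "B \<in> Pow Z"
    then have fB: "finite B" using fZ finite_subset by auto
    have "(\<Sum>c\<in>CV p n. if c \<in> VV p n B then 1 else 0) = real (card (VV p n B))"
      unfolding VV_def using card_filter_real[OF fCV, of "\<lambda>c. \<forall>t\<in>B. int p dvd ev n c t"]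
      by simp
    also have "\<dots> = real p ^ (n - card B)"
      using card_VV[OF pr fB, of n] B by (simp add: Z_def)
    finally show "(-1) ^ card B * (\<Sum>c\<in>CV p n. if c \<in> VV p n B then 1 else 0) = (-1) ^ card B * real p ^ (n - card B)"
      by simp
  qed
  also have "\<dots> = (\<Sum>k\<in>{0..p}. \<Sum>B\<in>{B. B \<in> Pow Z \<and> card B = k}. (-1) ^ card B * real p ^ (n - card B))"
    by (rule sum.group[symmetric]) (use fZ cZ card_mono in auto)
  also have "\<dots> = (\<Sum>k=0..p. (-1)^k * real (p choose k) * real p ^ (n - k))"
  proof (rule sum.cong[OF refl])
    fix k
    have "card {B. B \<in> Pow Z \<and> card B = k} = p choose k"
      using n_subsets[OF fZ, of k] cZ by simp
    then show "(\<Sum>B\<in>{B. B \<in> Pow Z \<and> card B = k}. (-1) ^ card B * real p ^ (n - card B))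
        = (-1)^k * real (p choose k) * real p ^ (n - k)"
      by simp
  qed
  finally show ?thesis .
qed

lemma polyval_cong:
  assumes "[x = y] (mod m)"
  shows "[polyval d a x = polyval d a y] (mod m)"
  unfolding polyval_def by (intro cong_sum cong_mult cong_pow cong_refl assms)

lemma not_dpp_iff:
  assumes p0: "p > 0"
  shows "\<not> dpp p (polyval d a) \<longleftrightarrow> (\<forall>t\<in>{0..<int p}. \<not> int p dvd polyval d a t)"
proof
  assume nd: "\<not> dpp p (polyval d a)"
  show "\<forall>t\<in>{0..<int p}. \<not> int p dvd polyval d a t"
  proof (intro ballI notI)
    fix t assume t: "t \<in> {0..<int p}" and dv: "int p dvd polyval d a t"
    have "dpp p (polyval d a)"
      unfolding dpp_def
    proof
      fix m :: int
      define j where "j = nat ((t - m) mod int p)"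
      have ij: "int j = (t - m) mod int p" using p0 by (simp add: j_def)
      have "(t - m) mod int p < int p" using p0 by simp
      then have jp: "j < p" using ij by linarith
      have "[m + int j = t] (mod int p)"
        unfolding ij cong_def by (simp add: mod_add_right_eq)
      then have "[polyval d a (m + int j) = polyval d a t] (mod int p)" by (rule polyval_cong)
      then have "int p dvd polyval d a (m + int j)"
        using dv by (simp add: cong_dvd_iff)
      then show "\<exists>j<p. int p dvd polyval d a (m + int j)" using jp by blast
    qed
    then show False using nd by simp
  qed
next
  assume h: "\<forall>t\<in>{0..<int p}. \<not> int p dvd polyval d a t"
  show "\<not> dpp p (polyval d a)"
  proof
    assume "dpp p (polyval d a)"
    then obtain j where "j < p" "int p dvd polyval d a (0 + int j)" unfolding dpp_def by blast
    then show False using h by auto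
  qed
qed

definition rv :: "nat \<Rightarrow> (nat \<Rightarrow> int) \<Rightarrow> (nat \<Rightarrow> int)" where
  "rv d a = (\<lambda>i. if i < Suc d then a (d - i) else undefined)"

lemma ev_rv: "ev (Suc d) (rv d a) t = polyval d a t"
proof -
  have "polyval d a t = (\<Sum>i<Suc d. a i * t ^ (d - i))"
    unfolding polyval_def by (simp add: atLeast0AtMost lessThan_Suc_atMost)
  also have "\<dots> = (\<Sum>i<Suc d. a (Suc d - Suc i) * t ^ (d - (Suc d - Suc i)))"
    by (rule sum.nat_diff_reindex[symmetric])
  also have "\<dots> = ev (Suc d) (rv d a) t"
    unfolding ev_def rv_def by (rule sum.cong) auto
  finally show ?thesis by simp
qed

lemma rv_inj: "inj_on (rv d) (coeff_vectors d p)"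
proof
  fix a1 a2 assume a: "a1 \<in> coeff_vectors d p" "a2 \<in> coeff_vectors d p" and eq: "rv d a1 = rv d a2"
  show "a1 = a2"
  proof
    fix i
    show "a1 i = a2 i"
    proof (cases "i \<le> d")
      case True
      have "rv d a1 (d - i) = rv d a2 (d - i)" using eq by simp
      moreover have "d - i < Suc d" "d - (d - i) = i" using True by auto
      ultimately show ?thesis unfolding rv_def by metis
    next
      case False
      then show ?thesis using a by (auto simp: coeff_vectors_def PiE_def extensional_def)
    qed
  qed
qed

lemma rv_image: "rv d ` coeff_vectors d p = CV p (Suc d)"
proof
  show "rv d ` coeff_vectors d p \<subseteq> CV p (Suc d)"
    by (auto simp: rv_def coeff_vectors_def CV_def PiE_def Pi_def extensional_def)
next
  show "CV p (Suc d) \<subseteq> rv d ` coeff_vectors d p"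
  proof
    fix c assume c: "c \<in> CV p (Suc d)"
    define a where "a = (\<lambda>i. if i \<le> d then c (d - i) else undefined)"
    have "a \<in> coeff_vectors d p" using c by (auto simp: a_def coeff_vectors_def CV_def PiE_def Pi_def extensional_def)
    moreover have "rv d a = c"
    proof
      fix i show "rv d a i = c i"
        using c by (cases "i < Suc d") (auto simp: rv_def a_def CV_def PiE_def extensional_def)
    qed
    ultimately show "c \<in> rv d ` coeff_vectors d p" by blast
  qed
qed



theorem proposition1:
  fixes d p :: nat
  assumes "d \<ge> 1" and "prime p"
  shows "measure_pmf.prob (pmf_of_set (coeff_vectors d p))
           {a. \<not> dpp p (polyval d a)} = D d p
         \<and> (p \<le> d + 1 \<longrightarrow> D d p = (1 - 1 / real p) ^ p)"
proof -
  have p2: "p \<ge> 2" using assms(2) prime_ge_2_nat by blast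
  then have p0: "p > 0" by simp
  define A where "A = coeff_vectors d p"
  have fA: "finite A" by (simp add: A_def coeff_vectors_def finite_PiE)
  have cA: "card A = p ^ Suc d" by (simp add: A_def coeff_vectors_def card_PiE)
  then have neA: "A \<noteq> {}" using p0 by auto
  define X where "X = {a \<in> A. \<forall>t\<in>{0..<int p}. \<not> int p dvd ev (Suc d) (rv d a) t}"
  have set_eq: "A \<inter> {a. \<not> dpp p (polyval d a)} = X"
  proof -
    have "\<And>a. (\<not> dpp p (polyval d a)) = (\<forall>t\<in>{0..<int p}. \<not> int p dvd ev (Suc d) (rv d a) t)"
      using not_dpp_iff[OF p0] by (simp only: ev_rv)
    then show ?thesis unfolding X_def by blast
  qed
  have im: "rv d ` X = NR p (Suc d)"
    unfolding NR_def X_def rv_image[of d p, symmetric] A_def by blast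
  have inj: "inj_on (rv d) X"
    by (rule inj_on_subset[OF rv_inj[of d p]]) (simp add: X_def A_def)
  have cc: "card (A \<inter> {a. \<not> dpp p (polyval d a)}) = card (NR p (Suc d))"
    unfolding set_eq im[symmetric] using card_image[OF inj] by simp
  have "measure_pmf.prob (pmf_of_set A) {a. \<not> dpp p (polyval d a)}
      = real (card (A \<inter> {a. \<not> dpp p (polyval d a)})) / real (card A)"
    using measure_pmf_of_set[OF neA fA] by simp
  also have "\<dots> = (\<Sum>k=0..p. (-1)^k * real (p choose k) * real p ^ (Suc d - k)) / real p ^ Suc d"
    unfolding cc card_NR[OF assms(2)] cA by simp
  also have "\<dots> = D d p" by (rule final_identity[OF p2])
  finally show ?thesis using D_small[OF p2] unfolding A_def by simp
qed

end
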